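(* Fix a tetrahedral erasure channel $W$. Then $A(W_n)=O(1/n)$ as $n\to\infty$; that is, there is a constant $C$ (depending on $W$) such that for every $n\ge1$, every $n$th-generation descendant $W'$ of $W$ satisfies $A(W')\le C/n$.
   Context: $\mathrm{TEC}(p,q,r,s,t)$ denotes a tetrahedral erasure channel with parameters $p,q,r,s,t\ge0$ summing to $1$; its moment of inertia is $A=(q-r)^2+(r-s)^2+(s-q)^2$. For $W=\mathrm{TEC}(p,q,r,s,t)$, the serial child is $W^{s}=\mathrm{TEC}(p^2,\ ps+sq+qp,\ pq+qr+rp,\ pr+rs+sp,\ 1-\text{(sum of the other four)})$ and the parallel child is $W^{p}=\mathrm{TEC}(1-\text{(sum of the other four)},\ ts+sq+qt,\ tq+qr+rt,\ tr+rs+st,\ t^2)$. The $0$th-generation descendant of $W$ is $W$; the $n$th-generation descendants are the children of the $(n-1)$th-generation descendants. $W_n$ denotes a (uniformly random) $n$th-generation descendant obtained by choosing a child with probability $1/2$ at each step. *)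

theory Defs
  imports Complex_Main
begin

text \<open>A tetrahedral erasure channel TEC(p,q,r,s,t) is represented by its parameter tuple.\<close>
type_synonym tec = "real \<times> real \<times> real \<times> real \<times> real"

definition is_tec :: "tec \<Rightarrow> bool" where
  "is_tec W = (case W of (p,q,r,s,t) \<Rightarrow>
     p \<ge> 0 \<and> q \<ge> 0 \<and> r \<ge> 0 \<and> s \<ge> 0 \<and> t \<ge> 0 \<and> p + q + r + s + t = 1)"

definition inertia :: "tec \<Rightarrow> real" where
  "inertia W = (case W of (p,q,r,s,t) \<Rightarrow> (q - r)^2 + (r - s)^2 + (s - q)^2)"

definition serial_child :: "tec \<Rightarrow> tec" where
  "serial_child W = (case W of (p,q,r,s,t) \<Rightarrow>
     (let p' = p^2; q' = p*s + s*q + q*p; r' = p*q + q*r + r*p; s' = p*r + r*s + s*p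
      in (p', q', r', s', 1 - (p' + q' + r' + s'))))"

definition parallel_child :: "tec \<Rightarrow> tec" where
  "parallel_child W = (case W of (p,q,r,s,t) \<Rightarrow>
     (let q' = t*s + s*q + q*t; r' = t*q + q*r + r*t; s' = t*r + r*s + s*t; t' = t^2
      in (1 - (q' + r' + s' + t'), q', r', s', t')))"

fun descendants :: "nat \<Rightarrow> tec \<Rightarrow> tec set" where
  "descendants 0 W = {W}"
| "descendants (Suc n) W = (\<Union>V \<in> descendants n W. {serial_child V, parallel_child V})"

end

theory Submission
  imports Defs
begin

lemma term_bound:
  fixes f a :: real
  assumes "0 \<le> f" "\<bar>a\<bar> \<le> 1 - f"
  shows "(f*a)^2 \<le> a^2 - a^4"
proof -
  have h1: "\<bar>a\<bar> \<le> 1" using assms by linarith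
  have "f^2 \<le> (1-\<bar>a\<bar>)^2" using assms by (intro power_mono) auto
  also have "\<dots> \<le> 1 - a^2"
  proof -
    have "a^2 = \<bar>a\<bar>*\<bar>a\<bar>" by (simp add: power2_eq_square abs_mult_self_eq)
    moreover have "\<bar>a\<bar>*\<bar>a\<bar> \<le> \<bar>a\<bar>" using h1 mult_left_le[of "\<bar>a\<bar>" "\<bar>a\<bar>"] by simp
    ultimately show ?thesis by (simp add: power2_eq_square algebra_simps)
  qed
  finally have "f^2 \<le> 1 - a^2" .
  hence "f^2 * a^2 \<le> (1 - a^2) * a^2" by (intro mult_right_mono) auto
  thus ?thesis by (simp add: power_mult_distrib algebra_simps power4_eq_xxxx power2_eq_square)
qed

lemma quart: fixes a b c :: real
  shows "(a^2+b^2+c^2)^2 \<le> 3*(a^4+b^4+c^4)"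
proof -
  have "0 \<le> (a^2-b^2)^2 + (b^2-c^2)^2 + (c^2-a^2)^2" by simp
  thus ?thesis by (simp add: power2_eq_square power4_eq_xxxx algebra_simps)
qed

lemma comb:
  fixes I' x y z A B C A4 B4 C4 T :: real
  shows "I' = x+y+z \<Longrightarrow> x \<le> A - A4 \<Longrightarrow> y \<le> B - B4 \<Longrightarrow> z \<le> C - C4
    \<Longrightarrow> T \<le> 3*(A4+B4+C4) \<Longrightarrow> I' \<le> (A+B+C) - T/3"
  by (simp add: field_simps)

lemma serial_step:
  assumes "is_tec V"
  shows "is_tec (serial_child V) \<and> inertia (serial_child V) \<le> inertia V - (inertia V)^2/3"
proof -
  obtain p q r s t where V: "V = (p,q,r,s,t)" by (cases V) auto
  have nn: "p \<ge> 0" "q \<ge> 0" "r \<ge> 0" "s \<ge> 0" "t \<ge> 0" and sm: "p+q+r+s+t = 1"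
    using assms V by (auto simp: is_tec_def)
  have "p^2 + (p*s + s*q + q*p) + (p*q + q*r + r*p) + (p*r + r*s + s*p) \<le> (p+q+r+s)^2"
    using nn by (simp add: power2_eq_square algebra_simps)
  also have "\<dots> \<le> 1" using nn sm by (intro power_le_one) auto
  finally have t1: "p^2 + (p*s + s*q + q*p) + (p*q + q*r + r*p) + (p*r + r*s + s*p) \<le> 1" .
  have tec: "is_tec (serial_child V)" using nn t1
    by (simp add: V serial_child_def is_tec_def Let_def)
  have e1: "(p*s + s*q + q*p) - (p*q + q*r + r*p) = (p+q)*(s-r)" by algebra
  have e2: "(p*q + q*r + r*p) - (p*r + r*s + s*p) = (p+r)*(q-s)" by algebra
  have e3: "(p*r + r*s + s*p) - (p*s + s*q + q*p) = (p+s)*(r-q)" by algebra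
  have b1: "((p+q)*(s-r))^2 \<le> (s-r)^2 - (s-r)^4" using nn sm by (intro term_bound) auto
  have b2: "((p+r)*(q-s))^2 \<le> (q-s)^2 - (q-s)^4" using nn sm by (intro term_bound) auto
  have b3: "((p+s)*(r-q))^2 \<le> (r-q)^2 - (r-q)^4" using nn sm by (intro term_bound) auto
  have I: "inertia V = (q - r)^2 + (r - s)^2 + (s - q)^2" by (simp add: V inertia_def)
  have I': "inertia (serial_child V) = ((p+q)*(s-r))^2 + ((p+r)*(q-s))^2 + ((p+s)*(r-q))^2"
    by (simp add: V inertia_def serial_child_def Let_def e1 e2 e3)
  have q: "((s-r)^2+(q-s)^2+(r-q)^2)^2 \<le> 3*((s-r)^4+(q-s)^4+(r-q)^4)"
    by (rule quart)
  have "(r-s)^2 = (s-r)^2" "(s-q)^2 = (q-s)^2" "(q-r)^2 = (r-q)^2" by (simp_all add: power2_commute)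
  hence IV: "inertia V = (s-r)^2+(q-s)^2+(r-q)^2" using I by linarith
  have "inertia (serial_child V) \<le> inertia V - (inertia V)^2/3"
    unfolding IV by (rule comb[OF I' b1 b2 b3 q])
  with tec show ?thesis by blast
qed

lemma parallel_step:
  assumes "is_tec V"
  shows "is_tec (parallel_child V) \<and> inertia (parallel_child V) \<le> inertia V - (inertia V)^2/3"
proof -
  obtain p q r s t where V: "V = (p,q,r,s,t)" by (cases V) auto
  have nn: "p \<ge> 0" "q \<ge> 0" "r \<ge> 0" "s \<ge> 0" "t \<ge> 0" and sm: "p+q+r+s+t = 1"
    using assms V by (auto simp: is_tec_def)
  have "(t*s + s*q + q*t) + (t*q + q*r + r*t) + (t*r + r*s + s*t) + t^2 \<le> (t+q+r+s)^2"
    using nn by (simp add: power2_eq_square algebra_simps)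
  also have "\<dots> \<le> 1" using nn sm by (intro power_le_one) auto
  finally have t1: "(t*s + s*q + q*t) + (t*q + q*r + r*t) + (t*r + r*s + s*t) + t^2 \<le> 1" .
  have tec: "is_tec (parallel_child V)" using nn t1
    by (simp add: V parallel_child_def is_tec_def Let_def)
  have e1: "(t*s + s*q + q*t) - (t*q + q*r + r*t) = (t+q)*(s-r)" by algebra
  have e2: "(t*q + q*r + r*t) - (t*r + r*s + s*t) = (t+r)*(q-s)" by algebra
  have e3: "(t*r + r*s + s*t) - (t*s + s*q + q*t) = (t+s)*(r-q)" by algebra
  have b1: "((t+q)*(s-r))^2 \<le> (s-r)^2 - (s-r)^4" using nn sm by (intro term_bound) auto
  have b2: "((t+r)*(q-s))^2 \<le> (q-s)^2 - (q-s)^4" using nn sm by (intro term_bound) auto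
  have b3: "((t+s)*(r-q))^2 \<le> (r-q)^2 - (r-q)^4" using nn sm by (intro term_bound) auto
  have I: "inertia V = (q - r)^2 + (r - s)^2 + (s - q)^2" by (simp add: V inertia_def)
  have I': "inertia (parallel_child V) = ((t+q)*(s-r))^2 + ((t+r)*(q-s))^2 + ((t+s)*(r-q))^2"
    by (simp add: V inertia_def parallel_child_def Let_def e1 e2 e3)
  have q: "((s-r)^2+(q-s)^2+(r-q)^2)^2 \<le> 3*((s-r)^4+(q-s)^4+(r-q)^4)"
    by (rule quart)
  have "(r-s)^2 = (s-r)^2" "(s-q)^2 = (q-s)^2" "(q-r)^2 = (r-q)^2" by (simp_all add: power2_commute)
  hence IV: "inertia V = (s-r)^2+(q-s)^2+(r-q)^2" using I by linarith
  have "inertia (parallel_child V) \<le> inertia V - (inertia V)^2/3"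
    unfolding IV by (rule comb[OF I' b1 b2 b3 q])
  with tec show ?thesis by blast
qed

lemma desc_tec: "is_tec W \<Longrightarrow> W' \<in> descendants n W \<Longrightarrow> is_tec W'"
proof (induction n arbitrary: W')
  case 0 then show ?case by simp
next
  case (Suc n)
  then obtain V where V: "V \<in> descendants n W" "W' = serial_child V \<or> W' = parallel_child V"
    by auto
  have "is_tec V" using Suc.IH[OF Suc.prems(1) V(1)] .
  then show ?case using V(2) serial_step parallel_step by blast
qed

lemma inertia_nonneg: "inertia V \<ge> 0"
  by (cases V) (simp add: inertia_def)

lemma g_bound:
  fixes u :: real and n :: nat
  assumes "0 \<le> u" "u \<le> 3 / real n" "n \<ge> 1"
  shows "u - u^2/3 \<le> 3 / real (Suc n)"
proof (cases "n \<le> 3")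
  case True
  have "u - u^2/3 \<le> 3/4" using sum_power2_ge_zero
  proof -
    have "0 \<le> (u - 3/2)^2" by simp
    thus ?thesis by (simp add: power2_eq_square algebra_simps)
  qed
  moreover have "3/4 \<le> 3 / real (Suc n)" using True by (simp add: field_simps)
  ultimately show ?thesis by linarith
next
  case False
  define x where "x = 3 / real n"
  have xp: "0 < x" "x \<le> 3/2" using False by (auto simp: x_def field_simps)
  have "u - u^2/3 \<le> x - x^2/3"
  proof -
    have "0 \<le> (x - u) * (1 - (x+u)/3)" using assms xp x_def
      by (intro mult_nonneg_nonneg) auto
    hence "0 \<le> x - u - (x*x - u*u)/3" by (simp add: algebra_simps)
    thus ?thesis by (simp add: power2_eq_square diff_divide_distrib)
  qed
  also have "x - x^2/3 \<le> 3 / real (Suc n)"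
    using False by (simp add: x_def field_simps power2_eq_square)
  finally show ?thesis .
qed

lemma desc_bound: "n \<ge> 1 \<Longrightarrow> is_tec W \<Longrightarrow> W' \<in> descendants n W \<Longrightarrow> inertia W' \<le> 3 / real n"
proof (induction n arbitrary: W' rule: nat_induct_at_least)
  case base
  then obtain V where V: "V \<in> descendants 0 W" "W' = serial_child V \<or> W' = parallel_child V"
    by auto
  have tV: "is_tec V" using V base desc_tec by blast
  have "inertia W' \<le> inertia V - (inertia V)^2/3"
    using V(2) serial_step[OF tV] parallel_step[OF tV] by auto
  also have "\<dots> \<le> 3/4"
  proof -
    have "0 \<le> (inertia V - 3/2)^2" by simp
    thus ?thesis by (simp add: power2_eq_square algebra_simps)
  qed
  finally show ?case by simp
next
  case (Suc n)
  then obtain V where V: "V \<in> descendants n W" "W' = serial_child V \<or> W' = parallel_child V"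
    by auto
  have tV: "is_tec V" using V Suc desc_tec by blast
  have "inertia W' \<le> inertia V - (inertia V)^2/3"
    using V(2) serial_step[OF tV] parallel_step[OF tV] by auto
  also have "\<dots> \<le> 3 / real (Suc n)"
    using g_bound[OF inertia_nonneg Suc.IH[OF Suc.prems(1) V(1)] Suc.hyps(1)] .
  finally show ?case .
qed

theorem mainTheorem3:
  fixes W :: tec
  assumes "is_tec W"
  shows "\<exists>C::real. \<forall>n::nat. n \<ge> 1 \<longrightarrow>
           (\<forall>W' \<in> descendants n W. inertia W' \<le> C / real n)"
  using desc_bound[OF _ assms] by blast

end
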